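(* Let $\omega_1,\dots,\omega_m$ be holomorphic $2$-forms on $\mathbb{H}^2$, continuous at the cusps $\mathbb{P}^1(K)$, and let $g:[0,2]^2\to\mathbb{H}^2\cup\mathbb{P}^1(K)$ be a membrane. Let $A\subset[0,1]^2$ be a diangle (a $2$-dimensional region homeomorphic to a disc, bounded by two arcs) with vertices $(0,0)$ and $(1,1)$, and let $B\subset[1,2]^2$ be a diangle with vertices $(1,1)$ and $(2,2)$; put $U=g(A)$, $V=g(B)$. Then (i) $\displaystyle\int_{g,U\cup V}\omega_1\cdots\omega_m=\sum_{j=0}^m\int_{g,U}\omega_1\cdots\omega_j\int_{g,V}\omega_{j+1}\cdots\omega_m$ (empty integrals being $1$); (ii) $J^a(g;A\cup B;\Omega)=J^a(g;A;\Omega)\,J^a(g;B;\Omega)$.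
   Context: $K$ is a real quadratic field, $\mathbb{H}^2=\mathbb{H}\times\mathbb{H}$ with cusps $\mathbb{P}^1(K)$. A membrane on a square $[0,L]^2$ is a continuous piecewise differentiable map into $\mathbb{H}^2\cup\mathbb{P}^1(K)$ sending each coordinate line $\{t_1=a\}$, $\{t_2=a\}$ into a finite union of holomorphic curves. For a region $A$ in the square, the (type a, ordered) iterated integral over $U=g(A)$ is \[\int_{g,U}\omega_1\cdots\omega_m=\int_{D_A}\bigwedge_{j=1}^m g^*\omega_j(t_{1,j},t_{2,j}),\] where $D_A=\{(t_{1,1},\dots,t_{1,m},t_{2,1},\dots,t_{2,m}): t_{1,1}\le\dots\le t_{1,m},\ t_{2,1}\le\dots\le t_{2,m},\ (t_{1,j},t_{2,j})\in A\text{ for }j=1,\dots,m\}$ and $g^*\omega_j(x,y)$ is the pulled-back $2$-form in coordinates $(x,y)$. With $\Omega=(\omega_1,\dots,\omega_m)$ and non-commuting formal variables $X_1,\dots,X_m$, the type a generating series is \[J^a(g;A;\Omega)=1+\sum_{k\ge1}\sum_{c:\{1,\dots,k\}\to\{1,\dots,m\}}X_{c(1)}\cdots X_{c(k)}\int_{g,g(A)}\omega_{c(1)}\cdots\omega_{c(k)},\] an element of the ring of non-commutative formal power series $\mathbb{C}\langle\langle X_1,\dots,X_m\rangle\rangle$. *)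

theory Defs
  imports "HOL-Analysis.Analysis" "HOL-Computational_Algebra.Squarefree"
begin

text \<open>A real quadratic field is Q(sqrt d) for a unique squarefree integer d > 1.
  Elements a + b sqrt d of K are represented by pairs of rationals (a,b).\<close>

definition real_quadratic_param :: "int \<Rightarrow> bool" where
  "real_quadratic_param d \<longleftrightarrow> d > 1 \<and> squarefree d"

definition emb1 :: "int \<Rightarrow> rat \<times> rat \<Rightarrow> real" where
  "emb1 d x = of_rat (fst x) + of_rat (snd x) * sqrt (of_int d)"

definition emb2 :: "int \<Rightarrow> rat \<times> rat \<Rightarrow> real" where
  "emb2 d x = of_rat (fst x) - of_rat (snd x) * sqrt (of_int d)"

datatype cusp = CInf | CFin "rat \<times> rat"

text \<open>Points of H^2 \<union> P^1(K); only the elements of hspace are meaningful.\<close>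
datatype hpt = Inner complex complex | Cusp cusp

definition upper :: "complex set" where
  "upper = {z. Im z > 0}"

definition hspace :: "hpt set" where
  "hspace = {Inner z w |z w. z \<in> upper \<and> w \<in> upper} \<union> range Cusp"

fun horoball :: "int \<Rightarrow> cusp \<Rightarrow> real \<Rightarrow> hpt set" where
  "horoball d CInf C = {Inner z w |z w. z \<in> upper \<and> w \<in> upper \<and> Im z * Im w > C}"
| "horoball d (CFin a) C = {Inner z w |z w. z \<in> upper \<and> w \<in> upper \<and>
      (Im z / (cmod (z - of_real (emb1 d a)))\<^sup>2) * (Im w / (cmod (w - of_real (emb2 d a)))\<^sup>2) > C}"

definition satake_open :: "int \<Rightarrow> hpt set \<Rightarrow> bool" where
  "satake_open d U \<longleftrightarrow> U \<subseteq> hspace \<and> open {(z, w). Inner z w \<in> U} \<and>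
     (\<forall>\<kappa>. Cusp \<kappa> \<in> U \<longrightarrow> (\<exists>C. horoball d \<kappa> C \<subseteq> U))"

definition satake_top :: "int \<Rightarrow> hpt topology" where
  "satake_top d = topology (satake_open d)"

text \<open>A holomorphic 2-form f(z1,z2) dz1 \<and> dz2 on H^2 is given by its coefficient f
  (holomorphic = continuous and separately holomorphic, Osgood).\<close>
definition holo_form :: "(complex \<Rightarrow> complex \<Rightarrow> complex) \<Rightarrow> bool" where
  "holo_form f \<longleftrightarrow> continuous_on (upper \<times> upper) (\<lambda>(z, w). f z w) \<and>
     (\<forall>w\<in>upper. (\<lambda>z. f z w) holomorphic_on upper) \<and>
     (\<forall>z\<in>upper. (\<lambda>w. f z w) holomorphic_on upper)"

definition cont_at_cusps :: "int \<Rightarrow> (complex \<Rightarrow> complex \<Rightarrow> complex) \<Rightarrow> bool" where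
  "cont_at_cusps d f \<longleftrightarrow> (\<exists>F. continuous_map (satake_top d) euclidean (F :: hpt \<Rightarrow> complex) \<and>
     (\<forall>z\<in>upper. \<forall>w\<in>upper. F (Inner z w) = f z w))"

definition holo_curve :: "hpt set \<Rightarrow> bool" where
  "holo_curve S \<longleftrightarrow> (\<exists>D \<phi>1 \<phi>2. open D \<and> connected D \<and> D \<noteq> {} \<and>
     \<phi>1 holomorphic_on D \<and> \<phi>2 holomorphic_on D \<and> \<phi>1 ` D \<subseteq> upper \<and> \<phi>2 ` D \<subseteq> upper \<and>
     \<not> (\<phi>1 constant_on D \<and> \<phi>2 constant_on D) \<and>
     S = (\<lambda>x. Inner (\<phi>1 x) (\<phi>2 x)) ` D)"

definition sq :: "real \<Rightarrow> (real \<times> real) set" where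
  "sq L = {0..L} \<times> {0..L}"

text \<open>H^2-coordinates of a map into H^2 \<union> P^1(K) (junk value at cusps).\<close>
definition coords :: "(real \<times> real \<Rightarrow> hpt) \<Rightarrow> real \<times> real \<Rightarrow> complex \<times> complex" where
  "coords g t = (case g t of Inner z w \<Rightarrow> (z, w) | Cusp _ \<Rightarrow> (0, 0))"

definition is_inner :: "hpt \<Rightarrow> bool" where
  "is_inner p \<longleftrightarrow> (\<exists>z w. p = Inner z w)"

definition piecewise_diff :: "real \<Rightarrow> (real \<times> real \<Rightarrow> hpt) \<Rightarrow> bool" where
  "piecewise_diff L g \<longleftrightarrow> (\<exists>P. finite P \<and> (\<forall>t\<in>sq L. fst t \<notin> P \<and> snd t \<notin> P \<longrightarrow>
      is_inner (g t) \<and> coords g differentiable (at t)))"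

definition membrane :: "int \<Rightarrow> real \<Rightarrow> (real \<times> real \<Rightarrow> hpt) \<Rightarrow> bool" where
  "membrane d L g \<longleftrightarrow> L > 0 \<and>
     continuous_map (top_of_set (sq L)) (satake_top d) g \<and> g ` sq L \<subseteq> hspace \<and>
     piecewise_diff L g \<and>
     (\<forall>a\<in>{0..L}. \<exists>Cs. finite Cs \<and> (\<forall>C\<in>Cs. holo_curve C) \<and>
         g ` ({a} \<times> {0..L}) \<subseteq> \<Union>Cs \<union> range Cusp) \<and>
     (\<forall>a\<in>{0..L}. \<exists>Cs. finite Cs \<and> (\<forall>C\<in>Cs. holo_curve C) \<and>
         g ` ({0..L} \<times> {a}) \<subseteq> \<Union>Cs \<union> range Cusp)"

text \<open>Coefficient of g^*(f dz1 \<and> dz2) with respect to dx \<and> dy.\<close>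
definition pullback :: "(real \<times> real \<Rightarrow> hpt) \<Rightarrow> (complex \<Rightarrow> complex \<Rightarrow> complex) \<Rightarrow> real \<times> real \<Rightarrow> complex" where
  "pullback g f t = (if is_inner (g t) \<and> coords g differentiable (at t) then
     (let D = frechet_derivative (coords g) (at t);
          u = D (1, 0); v = D (0, 1)
      in f (fst (coords g t)) (snd (coords g t)) * (fst u * snd v - fst v * snd u))
     else 0)"

definition DA :: "(real \<times> real) set \<Rightarrow> nat \<Rightarrow> (nat \<Rightarrow> real \<times> real) set" where
  "DA A n = {t \<in> PiE {..<n} (\<lambda>_. UNIV). (\<forall>j<n. t j \<in> A) \<and>
      (\<forall>j. Suc j < n \<longrightarrow> fst (t j) \<le> fst (t (Suc j)) \<and> snd (t j) \<le> snd (t (Suc j)))}"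

definition iter_int :: "(real \<times> real \<Rightarrow> hpt) \<Rightarrow> (real \<times> real) set \<Rightarrow>
    (complex \<Rightarrow> complex \<Rightarrow> complex) list \<Rightarrow> complex" where
  "iter_int g A ws = set_lebesgue_integral (PiM {..<length ws} (\<lambda>_. lborel)) (DA A (length ws))
      (\<lambda>t. \<Prod>j<length ws. pullback g (ws ! j) (t j))"

text \<open>Non-commutative formal power series in X_0,...,X_{m-1}: coefficient functions on
  words (lists of letter indices). Cauchy product:\<close>
definition nc_mult :: "(nat list \<Rightarrow> complex) \<Rightarrow> (nat list \<Rightarrow> complex) \<Rightarrow> nat list \<Rightarrow> complex" where
  "nc_mult F G w = (\<Sum>k\<le>length w. F (take k w) * G (drop k w))"

definition Ja :: "(real \<times> real \<Rightarrow> hpt) \<Rightarrow> (real \<times> real) set \<Rightarrow>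
    (complex \<Rightarrow> complex \<Rightarrow> complex) list \<Rightarrow> nat list \<Rightarrow> complex" where
  "Ja g A ws w = (if set w \<subseteq> {..<length ws} then iter_int g A (map (\<lambda>i. ws ! i) w) else 0)"

definition diangle :: "(real \<times> real) set \<Rightarrow> real \<times> real \<Rightarrow> real \<times> real \<Rightarrow> bool" where
  "diangle A p q \<longleftrightarrow> (\<exists>\<gamma>1 \<gamma>2. arc \<gamma>1 \<and> arc \<gamma>2 \<and>
      pathstart \<gamma>1 = p \<and> pathfinish \<gamma>1 = q \<and> pathstart \<gamma>2 = p \<and> pathfinish \<gamma>2 = q \<and>
      path_image \<gamma>1 \<inter> path_image \<gamma>2 = {p, q} \<and>
      A = path_image \<gamma>1 \<union> path_image \<gamma>2 \<union> inside (path_image \<gamma>1 \<union> path_image \<gamma>2) \<and>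
      A homeomorphic (cball (0::real \<times> real) 1))"

end

theory Submission
  imports Defs
begin

abbreviation PP :: "nat \<Rightarrow> (nat \<Rightarrow> real \<times> real) measure" where
  "PP n \<equiv> PiM {..<n} (\<lambda>_. lborel)"

interpretation PSF: product_sigma_finite "\<lambda>_::nat. lborel :: (real\<times>real) measure"
  by standard

lemma space_PP: "space (PP n) = PiE {..<n} (\<lambda>_. UNIV)"
  by (simp add: space_PiM)

lemma comp_meas: "j < n \<Longrightarrow> (\<lambda>t. t j) \<in> measurable (PP n) borel"
  using measurable_component_singleton[of j "{..<n}" "\<lambda>_. lborel"] by simp

lemma DA_sets:
  assumes S: "S \<in> sets borel"
  shows "DA S n \<in> sets (PP n)"
proof -
  have cf: "fst \<in> borel_measurable (borel :: (real \<times> real) measure)"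
    by (rule borel_measurable_continuous_onI) (intro continuous_intros)
  have cs: "snd \<in> borel_measurable (borel :: (real \<times> real) measure)"
    by (rule borel_measurable_continuous_onI) (intro continuous_intros)
  have P1: "Measurable.pred (PP n) (\<lambda>t. t j \<in> S)" if "j \<in> {..<n}" for j
  proof -
    from that have j: "j < n" by simp
    have "{t \<in> space (PP n). t j \<in> S} = (\<lambda>t. t j) -` S \<inter> space (PP n)" by auto
    then show ?thesis unfolding pred_def using measurable_sets[OF comp_meas[OF j] S] by simp
  qed
  have P2: "Measurable.pred (PP n) (\<lambda>t. Suc j < n \<longrightarrow> fst (t j) \<le> fst (t (Suc j)) \<and> snd (t j) \<le> snd (t (Suc j)))" for j
  proof (cases "Suc j < n")
    case True
    then have j: "j < n" by simp
    have f1: "(\<lambda>t. fst (t j)) \<in> borel_measurable (PP n)" by (rule measurable_compose[OF comp_meas[OF j] cf])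
    have f2: "(\<lambda>t. fst (t (Suc j))) \<in> borel_measurable (PP n)" by (rule measurable_compose[OF comp_meas[OF True] cf])
    have s1: "(\<lambda>t. snd (t j)) \<in> borel_measurable (PP n)" by (rule measurable_compose[OF comp_meas[OF j] cs])
    have s2: "(\<lambda>t. snd (t (Suc j))) \<in> borel_measurable (PP n)" by (rule measurable_compose[OF comp_meas[OF True] cs])
    have "Measurable.pred (PP n) (\<lambda>t. fst (t j) \<le> fst (t (Suc j)))"
      unfolding pred_def by (rule borel_measurable_le[OF f1 f2])
    moreover have "Measurable.pred (PP n) (\<lambda>t. snd (t j) \<le> snd (t (Suc j)))"
      unfolding pred_def by (rule borel_measurable_le[OF s1 s2])
    ultimately have "Measurable.pred (PP n) (\<lambda>t. fst (t j) \<le> fst (t (Suc j)) \<and> snd (t j) \<le> snd (t (Suc j)))"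
      by (rule pred_intros_logic(3))
    then show ?thesis using True by simp
  next
    case False then show ?thesis by simp
  qed
  have "Measurable.pred (PP n) (\<lambda>t. (\<forall>j\<in>{..<n}. t j \<in> S) \<and>
      (\<forall>j\<in>{..<n}. Suc j < n \<longrightarrow> fst (t j) \<le> fst (t (Suc j)) \<and> snd (t j) \<le> snd (t (Suc j))))"
    by (intro pred_intros_logic(3) pred_intros_countable_bounded(3) P1 P2)
  moreover have "DA S n = {t \<in> space (PP n). (\<forall>j\<in>{..<n}. t j \<in> S) \<and>
      (\<forall>j\<in>{..<n}. Suc j < n \<longrightarrow> fst (t j) \<le> fst (t (Suc j)) \<and> snd (t j) \<le> snd (t (Suc j)))}"
    unfolding DA_def space_PP by auto
  ultimately show ?thesis by (simp add: pred_def)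
qed

lemma AE_PP_ne:
  "AE t in PP n. \<forall>k<n. t k \<noteq> c"
proof -
  have "\<forall>k\<in>{..<n}. AE t in PP n. t k \<noteq> c"
  proof
    fix k assume k: "k \<in> {..<n}"
    define X where "X = (\<lambda>i::nat. if i = k then {c} else (UNIV :: (real\<times>real) set))"
    have X: "X i \<in> sets lborel" for i unfolding X_def by (cases "i = k") auto
    have X': "X i \<in> sets borel" for i unfolding X_def by (cases "i = k") auto
    have eq: "{t \<in> space (PP n). t k = c} = PiE {..<n} X"
    proof (intro set_eqI iffI)
      fix t assume "t \<in> {t \<in> space (PP n). t k = c}"
      then show "t \<in> PiE {..<n} X" unfolding space_PP X_def by (auto simp: PiE_iff)
    next
      fix t assume t: "t \<in> PiE {..<n} X"
      then have "t k \<in> X k" using k by (rule PiE_mem)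
      then have "t k = c" unfolding X_def by simp
      moreover have "t \<in> space (PP n)" using t unfolding space_PP by (auto simp: PiE_iff)
      ultimately show "t \<in> {t \<in> space (PP n). t k = c}" by simp
    qed
    have "emeasure (PP n) (PiE {..<n} X) = (\<Prod>i\<in>{..<n}. emeasure lborel (X i))"
      by (rule PSF.emeasure_PiM) (auto intro: X')
    also have "\<dots> = emeasure lborel (X k) * (\<Prod>i\<in>{..<n} - {k}. emeasure lborel (X i))"
      using k by (intro prod.remove) auto
    also have "emeasure lborel (X k) = 0" unfolding X_def by simp
    finally have "emeasure (PP n) {t \<in> space (PP n). t k = c} = 0" unfolding eq by simp
    moreover have "{t \<in> space (PP n). t k = c} \<in> sets (PP n)"
      unfolding eq by (rule sets_PiM_I_finite) (auto intro: X')
    ultimately have N: "{t \<in> space (PP n). t k = c} \<in> null_sets (PP n)" by (simp add: null_sets_def)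
    show "AE t in PP n. t k \<noteq> c"
      by (rule AE_I'[OF N]) auto
  qed
  then have "AE t in PP n. \<forall>k\<in>{..<n}. t k \<noteq> c"
    using AE_finite_allI[where S="{..<n}" and M="PP n" and Q="\<lambda>k t. t k \<noteq> c"] by blast
  then show ?thesis by (rule eventually_mono) auto
qed

lemma shift_meas:
  "(\<lambda>y. \<lambda>k\<in>{..<m}. y (k+j)) \<in> measurable (PiM L (\<lambda>_. lborel)) (PP m)"
  if "{j..<j+m} \<subseteq> L" for L :: "nat set"
proof (rule measurable_restrict)
  fix k assume "k \<in> {..<m}"
  then have "k + j \<in> L" using that by auto
  then show "(\<lambda>y. y (k + j)) \<in> measurable (PiM L (\<lambda>_. lborel)) lborel"
    by (rule measurable_component_singleton)
qed

lemma distr_shift: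
  "distr (PiM {j..<j+m} (\<lambda>_. lborel)) (PP m) (\<lambda>y. \<lambda>k\<in>{..<m}. y (k+j)) = PP m"
proof (rule PSF.PiM_eqI)
  show "finite {..<m}" by simp
  show "sets (distr (PiM {j..<j+m} (\<lambda>_. lborel)) (PP m) (\<lambda>y. \<lambda>k\<in>{..<m}. y (k+j))) = sets (PP m)"
    by simp
  fix A :: "nat \<Rightarrow> (real\<times>real) set" assume A: "\<And>i. i \<in> {..<m} \<Longrightarrow> A i \<in> sets lborel"
  have meas: "(\<lambda>y. \<lambda>k\<in>{..<m}. y (k+j)) \<in> measurable (PiM {j..<j+m} (\<lambda>_. lborel)) (PP m)"
    by (rule shift_meas) simp
  have pre: "(\<lambda>y. \<lambda>k\<in>{..<m}. y (k+j)) -` PiE {..<m} A \<inter> space (PiM {j..<j+m} (\<lambda>_. lborel))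
      = PiE {j..<j+m} (\<lambda>i. A (i - j))"
  proof (intro set_eqI iffI)
    fix y assume y: "y \<in> (\<lambda>y. \<lambda>k\<in>{..<m}. y (k+j)) -` PiE {..<m} A \<inter> space (PiM {j..<j+m} (\<lambda>_. lborel))"
    show "y \<in> PiE {j..<j+m} (\<lambda>i. A (i - j))"
      unfolding PiE_iff
    proof (intro conjI ballI)
      fix i assume i: "i \<in> {j..<j+m}"
      then have "i - j \<in> {..<m}" "i - j + j = i" by auto
      then show "y i \<in> A (i - j)" using y by (force simp: PiE_iff)
    next
      show "y \<in> extensional {j..<j+m}" using y by (simp add: space_PiM PiE_iff)
    qed
  next
    fix y assume y: "y \<in> PiE {j..<j+m} (\<lambda>i. A (i - j))"
    have "(\<lambda>k\<in>{..<m}. y (k+j)) \<in> PiE {..<m} A"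
    proof (rule PiE_I)
      fix k assume "k \<in> {..<m}"
      then have "k + j \<in> {j..<j+m}" by auto
      then have "y (k + j) \<in> A (k + j - j)" by (rule PiE_mem[OF y])
      then show "(\<lambda>k\<in>{..<m}. y (k+j)) k \<in> A k" using \<open>k \<in> {..<m}\<close> by simp
    qed simp
    moreover have "y \<in> space (PiM {j..<j+m} (\<lambda>_. lborel))"
      using y by (auto simp: space_PiM PiE_iff)
    ultimately show "y \<in> (\<lambda>y. \<lambda>k\<in>{..<m}. y (k+j)) -` PiE {..<m} A \<inter> space (PiM {j..<j+m} (\<lambda>_. lborel))"
      by simp
  qed
  have setA: "PiE {..<m} A \<in> sets (PP m)"
    using A by (intro sets_PiM_I_finite) auto
  have "emeasure (distr (PiM {j..<j+m} (\<lambda>_. lborel)) (PP m) (\<lambda>y. \<lambda>k\<in>{..<m}. y (k+j))) (PiE {..<m} A)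
      = emeasure (PiM {j..<j+m} (\<lambda>_. lborel)) (PiE {j..<j+m} (\<lambda>i. A (i - j)))"
    unfolding emeasure_distr[OF meas setA] pre ..
  also have "\<dots> = (\<Prod>i\<in>{j..<j+m}. emeasure lborel (A (i - j)))"
  proof (rule PSF.emeasure_PiM)
    show "finite {j..<j+m}" by simp
    fix i assume "i \<in> {j..<j+m}"
    then have "i - j \<in> {..<m}" by auto
    then show "A (i - j) \<in> sets lborel" by (rule A)
  qed
  also have "\<dots> = (\<Prod>i\<in>{0+j..<m+j}. emeasure lborel (A (i - j)))"
    by (simp add: add.commute)
  also have "\<dots> = (\<Prod>i\<in>{0..<m}. emeasure lborel (A (i + j - j)))"
    by (rule prod.shift_bounds_nat_ivl)
  also have "\<dots> = (\<Prod>k\<in>{..<m}. emeasure lborel (A k))"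
    by (simp add: atLeast0LessThan)
  finally show "emeasure (distr (PiM {j..<j+m} (\<lambda>_. lborel)) (PP m) (\<lambda>y. \<lambda>k\<in>{..<m}. y (k+j))) (PiE {..<m} A)
      = (\<Prod>k\<in>{..<m}. emeasure lborel (A k))" .
qed

lemma integral_shift:
  fixes f :: "(nat \<Rightarrow> real \<times> real) \<Rightarrow> complex"
  assumes f: "f \<in> borel_measurable (PP m)"
  shows "integral\<^sup>L (PP m) f = (\<integral>y. f (\<lambda>k\<in>{..<m}. y (k+j)) \<partial>PiM {j..<j+m} (\<lambda>_. lborel))"
proof -
  have "integral\<^sup>L (PP m) f = integral\<^sup>L (distr (PiM {j..<j+m} (\<lambda>_. lborel)) (PP m) (\<lambda>y. \<lambda>k\<in>{..<m}. y (k+j))) f"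
    by (simp add: distr_shift)
  also have "\<dots> = (\<integral>y. f (\<lambda>k\<in>{..<m}. y (k+j)) \<partial>PiM {j..<j+m} (\<lambda>_. lborel))"
    by (rule integral_distr[OF shift_meas f]) simp
  finally show ?thesis .
qed

definition EE :: "(real\<times>real) set \<Rightarrow> (real\<times>real) set \<Rightarrow> nat \<Rightarrow> nat \<Rightarrow> (nat \<Rightarrow> real\<times>real) set" where
  "EE A B n j = {t \<in> PiE {..<n} (\<lambda>_. UNIV). restrict t {..<j} \<in> DA A j \<and> (\<lambda>k\<in>{..<n-j}. t (k+j)) \<in> DA B (n-j)}"

lemma shift_all1: fixes n j :: nat shows "(\<forall>k<n-j. P (k+j)) \<longleftrightarrow> (\<forall>k. j \<le> k \<and> k < n \<longrightarrow> P k)"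
proof
  assume H: "\<forall>k<n-j. P (k+j)"
  show "\<forall>k. j \<le> k \<and> k < n \<longrightarrow> P k"
  proof (intro allI impI)
    fix k assume "j \<le> k \<and> k < n"
    then have "k - j < n - j" "k - j + j = k" by auto
    then show "P k" using H by metis
  qed
next
  assume H: "\<forall>k. j \<le> k \<and> k < n \<longrightarrow> P k"
  show "\<forall>k<n-j. P (k+j)" using H by auto
qed

lemma shift_all2: fixes n j :: nat shows "(\<forall>k. Suc k < n-j \<longrightarrow> Q (k+j) (Suc k + j)) \<longleftrightarrow> (\<forall>k. j \<le> k \<and> Suc k < n \<longrightarrow> Q k (Suc k))"
proof
  assume H: "\<forall>k. Suc k < n-j \<longrightarrow> Q (k+j) (Suc k + j)"
  show "\<forall>k. j \<le> k \<and> Suc k < n \<longrightarrow> Q k (Suc k)"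
  proof (intro allI impI)
    fix k assume "j \<le> k \<and> Suc k < n"
    then have "Suc (k - j) < n - j" "k - j + j = k" "Suc (k - j) + j = Suc k" by auto
    then show "Q k (Suc k)" using H by metis
  qed
next
  assume H: "\<forall>k. j \<le> k \<and> Suc k < n \<longrightarrow> Q k (Suc k)"
  show "\<forall>k. Suc k < n-j \<longrightarrow> Q (k+j) (Suc k + j)" using H by auto
qed

lemma EE_iff:
  assumes j: "j \<le> n" and t: "t \<in> PiE {..<n} (\<lambda>_. UNIV)"
  shows "t \<in> EE A B n j \<longleftrightarrow> (\<forall>k<j. t k \<in> A) \<and> (\<forall>k. j \<le> k \<and> k < n \<longrightarrow> t k \<in> B) \<and>
     (\<forall>k. Suc k < j \<longrightarrow> fst (t k) \<le> fst (t (Suc k)) \<and> snd (t k) \<le> snd (t (Suc k))) \<and>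
     (\<forall>k. j \<le> k \<and> Suc k < n \<longrightarrow> fst (t k) \<le> fst (t (Suc k)) \<and> snd (t k) \<le> snd (t (Suc k)))"
proof -
  have 1: "restrict t {..<j} \<in> DA A j \<longleftrightarrow> (\<forall>k<j. t k \<in> A) \<and>
     (\<forall>k. Suc k < j \<longrightarrow> fst (t k) \<le> fst (t (Suc k)) \<and> snd (t k) \<le> snd (t (Suc k)))"
    unfolding DA_def by auto
  have "(\<lambda>k\<in>{..<n-j}. t (k+j)) \<in> DA B (n-j) \<longleftrightarrow> (\<forall>k<n-j. t (k+j) \<in> B) \<and>
     (\<forall>k. Suc k < n-j \<longrightarrow> fst (t (k+j)) \<le> fst (t (Suc k + j)) \<and> snd (t (k+j)) \<le> snd (t (Suc k + j)))"
    unfolding DA_def by auto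
  also have "\<dots> \<longleftrightarrow> (\<forall>k. j \<le> k \<and> k < n \<longrightarrow> t k \<in> B) \<and>
     (\<forall>k. j \<le> k \<and> Suc k < n \<longrightarrow> fst (t k) \<le> fst (t (Suc k)) \<and> snd (t k) \<le> snd (t (Suc k)))"
    using shift_all1[of n j "\<lambda>k. t k \<in> B"]
      shift_all2[of n j "\<lambda>a b. fst (t a) \<le> fst (t b) \<and> snd (t a) \<le> snd (t b)"] by simp
  finally show ?thesis using 1 t unfolding EE_def by auto
qed

lemma chain_le:
  fixes f :: "nat \<Rightarrow> real"
  assumes "\<forall>k. Suc k < n \<longrightarrow> f k \<le> f (Suc k)" "i \<le> k" "k < n"
  shows "f i \<le> f k"
  using assms(2,3)
proof (induction k)
  case 0 then show ?case by simp
next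
  case (Suc k)
  show ?case
  proof (cases "i = Suc k")
    case True then show ?thesis by simp
  next
    case False
    then have "i \<le> k" "k < n" using Suc.prems by auto
    then have "f i \<le> f k" by (rule Suc.IH)
    also have "f k \<le> f (Suc k)" using assms(1) Suc.prems by auto
    finally show ?thesis .
  qed
qed

lemma ind_split:
  assumes A: "A \<subseteq> {0..1} \<times> {0..1}" and B: "B \<subseteq> {1..2} \<times> {1..2}"
    and t: "t \<in> PiE {..<n} (\<lambda>_. UNIV)" and ne: "\<forall>k<n. t k \<noteq> (1,1)"
  shows "indicator (DA (A \<union> B) n) t = (\<Sum>j\<le>n. indicator (EE A B n j) t :: real)"
proof -
  have Ale: "fst p \<le> 1" "snd p \<le> 1" if "p \<in> A" for p using that A by auto
  have Bge: "fst p \<ge> 1" "snd p \<ge> 1" if "p \<in> B" for p using that B by auto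
  have EE_sub: "t \<in> DA (A \<union> B) n" if j: "j \<le> n" and tE: "t \<in> EE A B n j" for j
  proof -
    note E = tE[unfolded EE_iff[OF j t]]
    have "\<forall>k<n. t k \<in> A \<union> B"
    proof (intro allI impI)
      fix k assume "k < n" then show "t k \<in> A \<union> B" using E by (cases "k < j") auto
    qed
    moreover have "fst (t k) \<le> fst (t (Suc k)) \<and> snd (t k) \<le> snd (t (Suc k))" if k: "Suc k < n" for k
    proof (cases "Suc k < j")
      case True then show ?thesis using E by auto
    next
      case False
      show ?thesis
      proof (cases "j \<le> k")
        case True then show ?thesis using E k by auto
      next
        case False
        then have "Suc k = j" using \<open>\<not> Suc k < j\<close> by auto
        then have "t k \<in> A" "t (Suc k) \<in> B" using E k by auto
        then show ?thesis using Ale[of "t k"] Bge[of "t (Suc k)"] by auto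
      qed
    qed
    ultimately show ?thesis using t unfolding DA_def by auto
  qed
  show ?thesis
  proof (cases "t \<in> DA (A \<union> B) n")
    case False
    then have "\<forall>j\<in>{..n}. indicator (EE A B n j) t = (0::real)"
      using EE_sub by (auto simp: indicator_def)
    then show ?thesis using False by simp
  next
    case True
    then have memb: "\<forall>k<n. t k \<in> A \<union> B"
      and mono: "\<forall>k. Suc k < n \<longrightarrow> fst (t k) \<le> fst (t (Suc k)) \<and> snd (t k) \<le> snd (t (Suc k))"
      unfolding DA_def by auto
    have monoall: "fst (t i) \<le> fst (t k) \<and> snd (t i) \<le> snd (t k)" if "i \<le> k" "k < n" for i k
      using chain_le[of n "\<lambda>k. fst (t k)" i k] chain_le[of n "\<lambda>k. snd (t k)" i k] mono that by auto
    have disj: "t k = (1,1)" if "t k \<in> A" "t k \<in> B" for k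
      using Ale[OF that(1)] Bge[OF that(2)] by (simp add: prod_eq_iff)
    define j0 where "j0 = (if \<exists>k<n. t k \<in> B then LEAST k. k < n \<and> t k \<in> B else n)"
    have j0n: "j0 \<le> n"
    proof (cases "\<exists>k<n. t k \<in> B")
      case True
      then have "(LEAST k. k < n \<and> t k \<in> B) < n" by (metis (mono_tags, lifting) LeastI)
      then show ?thesis using True unfolding j0_def by simp
    qed (auto simp: j0_def)
    have Bchar: "t k \<in> B \<longleftrightarrow> j0 \<le> k" if k: "k < n" for k
    proof
      assume "t k \<in> B"
      then have ex: "\<exists>k<n. t k \<in> B" using k by auto
      then have "(LEAST k. k < n \<and> t k \<in> B) \<le> k" using k \<open>t k \<in> B\<close> by (intro Least_le) auto
      then show "j0 \<le> k" using ex unfolding j0_def by simp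
    next
      assume jk: "j0 \<le> k"
      have ex: "\<exists>k<n. t k \<in> B"
      proof (rule ccontr)
        assume "\<not> ?thesis" then have "j0 = n" unfolding j0_def by auto
        then show False using jk k by simp
      qed
      then have j0B: "j0 < n \<and> t j0 \<in> B" unfolding j0_def by simp (metis (mono_tags, lifting) LeastI)
      have le: "fst (t j0) \<le> fst (t k) \<and> snd (t j0) \<le> snd (t k)" using monoall jk k by blast
      show "t k \<in> B"
      proof (rule ccontr)
        assume "t k \<notin> B"
        then have "t k \<in> A" using memb k by auto
        then have "t k = (1,1)"
          using Ale[OF \<open>t k \<in> A\<close>] Bge[of "t j0"] j0B le by (simp add: prod_eq_iff)
        then show False using ne k by auto
      qed
    qed
    have Achar: "t k \<in> A \<longleftrightarrow> k < j0" if k: "k < n" for k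
    proof
      assume "t k \<in> A"
      show "k < j0"
      proof (rule ccontr)
        assume "\<not> k < j0"
        then have "t k \<in> B" using Bchar k by auto
        then show False using disj \<open>t k \<in> A\<close> ne k by blast
      qed
    next
      assume "k < j0"
      then have "t k \<notin> B" using Bchar k by auto
      then show "t k \<in> A" using memb k by auto
    qed
    have inj0: "t \<in> EE A B n j0"
      unfolding EE_iff[OF j0n t]
      using Achar Bchar mono j0n by auto
    have notin: "t \<notin> EE A B n j" if "j \<le> n" "j \<noteq> j0" for j
    proof
      assume tE: "t \<in> EE A B n j"
      note E = tE[unfolded EE_iff[OF that(1) t]]
      show False
      proof (cases "j < j0")
        case True
        then have "j < n" using j0n by auto
        then have "t j \<in> B" using E by auto
        then show False using Bchar \<open>j < n\<close> True by auto
      next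
        case False
        then have "j0 < j" using that(2) by auto
        then have "j0 < n" using that(1) by auto
        have "t j0 \<in> A" using E \<open>j0 < j\<close> by auto
        then show False using Achar \<open>j0 < n\<close> by auto
      qed
    qed
    have "(\<Sum>j\<le>n. indicator (EE A B n j) t :: real) = (\<Sum>j\<le>n. if j = j0 then 1 else 0)"
      using inj0 notin by (intro sum.cong) (auto simp: indicator_def)
    also have "\<dots> = 1" using j0n by simp
    finally show ?thesis using True by simp
  qed
qed

definition GG :: "(real\<times>real) set \<Rightarrow> nat \<Rightarrow> (nat \<Rightarrow> real\<times>real \<Rightarrow> complex) \<Rightarrow> (nat \<Rightarrow> real\<times>real) \<Rightarrow> complex" where
  "GG S n F t = indicator (DA S n) t *\<^sub>R (\<Prod>k<n. F k (t k))"

lemma prod_integrable: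
  assumes "\<And>k. integrable lborel (F k :: real\<times>real \<Rightarrow> complex)"
  shows "integrable (PP n) (\<lambda>t. \<Prod>k<n. F k (t k))"
  by (rule PSF.product_integrable_prod) (auto intro: assms)

lemma GG_integrable:
  assumes "\<And>k. integrable lborel (F k :: real\<times>real \<Rightarrow> complex)" "S \<in> sets borel"
  shows "integrable (PP n) (GG S n F)"
  unfolding GG_def by (intro integrable_mult_indicator DA_sets prod_integrable assms)

lemma EE_sets:
  assumes A: "A \<in> sets borel" and B: "B \<in> sets borel" and j: "j \<le> n"
  shows "EE A B n j \<in> sets (PP n)"
proof -
  have m1: "(\<lambda>t. restrict t {..<j}) \<in> measurable (PP n) (PP j)"
    using j by (intro measurable_restrict_subset) auto
  have m2: "(\<lambda>t. \<lambda>k\<in>{..<n-j}. t (k+j)) \<in> measurable (PP n) (PP (n-j))"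
    using j by (intro shift_meas) auto
  have "EE A B n j = ((\<lambda>t. restrict t {..<j}) -` DA A j \<inter> space (PP n)) \<inter>
      ((\<lambda>t. \<lambda>k\<in>{..<n-j}. t (k+j)) -` DA B (n-j) \<inter> space (PP n))"
    unfolding EE_def space_PP by auto
  also have "\<dots> \<in> sets (PP n)"
    by (intro sets.Int measurable_sets[OF m1] measurable_sets[OF m2] DA_sets A B)
  finally show ?thesis .
qed

lemma factor:
  assumes F: "\<And>k. integrable lborel (F k :: real\<times>real \<Rightarrow> complex)"
    and A: "A \<in> sets borel" and B: "B \<in> sets borel" and j: "j \<le> n"
  shows "(\<integral>t. indicator (EE A B n j) t *\<^sub>R (\<Prod>k<n. F k (t k)) \<partial>PP n)
     = integral\<^sup>L (PP j) (GG A j F) * integral\<^sup>L (PP (n-j)) (GG B (n-j) (\<lambda>k. F (k+j)))"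
proof -
  define I where "I = {..<j}"
  define J where "J = {j..<n}"
  have IJ: "{..<n} = I \<union> J" and dis: "I \<inter> J = {}" and fI: "finite I" and fJ: "finite J"
    using j unfolding I_def J_def by auto
  define f where "f t = indicator (EE A B n j) t *\<^sub>R (\<Prod>k<n. F k (t k))" for t
  define sh where "sh y = (\<lambda>k\<in>{..<n-j}. y (k+j))" for y :: "nat \<Rightarrow> real \<times> real"
  have int: "integrable (PP n) f"
    unfolding f_def by (intro integrable_mult_indicator EE_sets prod_integrable F A B j)
  have "integral\<^sup>L (PP n) f = integral\<^sup>L (PiM (I \<union> J) (\<lambda>_. lborel)) f"
    unfolding IJ ..
  also have "\<dots> = (\<integral>x. (\<integral>y. f (merge I J (x, y)) \<partial>PiM J (\<lambda>_. lborel)) \<partial>PiM I (\<lambda>_. lborel))"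
    using int unfolding IJ by (intro PSF.product_integral_fold dis fI fJ)
  also have "\<dots> = (\<integral>x. (\<integral>y. GG A j F x * GG B (n-j) (\<lambda>k. F (k+j)) (sh y) \<partial>PiM J (\<lambda>_. lborel)) \<partial>PiM I (\<lambda>_. lborel))"
  proof (rule Bochner_Integration.integral_cong[OF refl])
    fix x :: "nat \<Rightarrow> real \<times> real" assume x: "x \<in> space (PiM I (\<lambda>_. lborel))"
    show "(\<integral>y. f (merge I J (x, y)) \<partial>PiM J (\<lambda>_. lborel)) = (\<integral>y. GG A j F x * GG B (n-j) (\<lambda>k. F (k+j)) (sh y) \<partial>PiM J (\<lambda>_. lborel))"
  proof (rule Bochner_Integration.integral_cong[OF refl])
    fix y :: "nat \<Rightarrow> real \<times> real" assume y: "y \<in> space (PiM J (\<lambda>_. lborel))"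
    define t where "t = merge I J (x, y)"
    have xE: "x \<in> PiE I (\<lambda>_. UNIV)" and yE: "y \<in> PiE J (\<lambda>_. UNIV)"
      using x y by (auto simp: space_PiM)
    have tI: "k \<in> I \<Longrightarrow> t k = x k" and tJ: "k \<in> J \<Longrightarrow> t k = y k" for k
      unfolding t_def using dis by auto
    have "t \<in> extensional {..<n}"
      unfolding extensional_def IJ t_def by auto
    then have tE: "t \<in> PiE {..<n} (\<lambda>_. UNIV)" by (simp add: PiE_iff)
    have xext: "x \<in> extensional I" using xE by (simp add: PiE_iff)
    have rt: "restrict t {..<j} = x"
    proof
      fix k show "restrict t {..<j} k = x k"
      proof (cases "k < j")
        case True then show ?thesis using tI unfolding I_def by simp
      next
        case False
        then have "k \<notin> I" unfolding I_def by simp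
        then have "x k = undefined" using xext by (rule extensional_arb[rotated])
        then show ?thesis using False by simp
      qed
    qed
    have st: "(\<lambda>k\<in>{..<n-j}. t (k+j)) = sh y"
    proof
      fix k show "(\<lambda>k\<in>{..<n-j}. t (k+j)) k = sh y k"
      proof (cases "k < n - j")
        case True
        then have "k + j \<in> J" unfolding J_def by simp
        then show ?thesis using True tJ unfolding sh_def by simp
      next
        case False then show ?thesis unfolding sh_def by simp
      qed
    qed
    have Eiff: "t \<in> EE A B n j \<longleftrightarrow> x \<in> DA A j \<and> sh y \<in> DA B (n-j)"
      using tE rt st unfolding EE_def by simp
    have ind: "indicator (EE A B n j) t = (indicator (DA A j) x * indicator (DA B (n-j)) (sh y) :: real)"
      using Eiff by (cases "x \<in> DA A j"; cases "sh y \<in> DA B (n-j)") (simp_all add: indicator_def)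
    have "(\<Prod>k<n. F k (t k)) = (\<Prod>k\<in>I. F k (t k)) * (\<Prod>k\<in>J. F k (t k))"
      unfolding IJ by (rule prod.union_disjoint[OF fI fJ dis])
    also have "(\<Prod>k\<in>I. F k (t k)) = (\<Prod>k<j. F k (x k))"
      using tI unfolding I_def by simp
    also have "(\<Prod>k\<in>J. F k (t k)) = (\<Prod>k\<in>{0+j..<(n-j)+j}. F k (y k))"
      using tJ j unfolding J_def by (intro prod.cong) auto
    also have "\<dots> = (\<Prod>k\<in>{0..<n-j}. F (k+j) (y (k+j)))"
      by (rule prod.shift_bounds_nat_ivl)
    also have "\<dots> = (\<Prod>k<n-j. F (k+j) (sh y k))"
      unfolding sh_def by (simp add: atLeast0LessThan)
    finally have pr: "(\<Prod>k<n. F k (t k)) = (\<Prod>k<j. F k (x k)) * (\<Prod>k<n-j. F (k+j) (sh y k))" .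
    show "f (merge I J (x, y)) = GG A j F x * GG B (n-j) (\<lambda>k. F (k+j)) (sh y)"
      unfolding f_def t_def[symmetric] GG_def ind pr by (simp add: scaleR_conv_of_real)
  qed
  qed
  also have "\<dots> = (\<integral>x. GG A j F x * (\<integral>y. GG B (n-j) (\<lambda>k. F (k+j)) (sh y) \<partial>PiM J (\<lambda>_. lborel)) \<partial>PiM I (\<lambda>_. lborel))"
    by simp
  also have "(\<integral>y. GG B (n-j) (\<lambda>k. F (k+j)) (sh y) \<partial>PiM J (\<lambda>_. lborel)) = integral\<^sup>L (PP (n-j)) (GG B (n-j) (\<lambda>k. F (k+j)))"
  proof -
    have "J = {j..<j + (n-j)}" unfolding J_def using j by auto
    then show ?thesis unfolding sh_def
      using integral_shift[OF borel_measurable_integrable[OF GG_integrable[OF F B]], where j=j] by simp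
  qed
  finally show ?thesis unfolding f_def I_def by simp
qed

lemma split_main:
  assumes F: "\<And>k. integrable lborel (F k :: real\<times>real \<Rightarrow> complex)"
    and Asub: "A \<subseteq> {0..1} \<times> {0..1}" and Bsub: "B \<subseteq> {1..2} \<times> {1..2}"
    and A: "A \<in> sets borel" and B: "B \<in> sets borel"
  shows "integral\<^sup>L (PP n) (GG (A \<union> B) n F)
     = (\<Sum>j\<le>n. integral\<^sup>L (PP j) (GG A j F) * integral\<^sup>L (PP (n-j)) (GG B (n-j) (\<lambda>k. F (k+j))))"
proof -
  have intE: "integrable (PP n) (\<lambda>t. indicator (EE A B n j) t *\<^sub>R (\<Prod>k<n. F k (t k)))" if "j \<in> {..n}" for j
    using that by (intro integrable_mult_indicator EE_sets prod_integrable F A B) auto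
  have "integral\<^sup>L (PP n) (GG (A \<union> B) n F)
      = (\<integral>t. (\<Sum>j\<le>n. indicator (EE A B n j) t *\<^sub>R (\<Prod>k<n. F k (t k))) \<partial>PP n)"
  proof (rule integral_cong_AE)
    show "GG (A \<union> B) n F \<in> borel_measurable (PP n)"
      using A B by (intro borel_measurable_integrable GG_integrable F) auto
    show "(\<lambda>t. \<Sum>j\<le>n. indicator (EE A B n j) t *\<^sub>R (\<Prod>k<n. F k (t k))) \<in> borel_measurable (PP n)"
      by (intro borel_measurable_integrable Bochner_Integration.integrable_sum intE)
    show "AE t in PP n. GG (A \<union> B) n F t = (\<Sum>j\<le>n. indicator (EE A B n j) t *\<^sub>R (\<Prod>k<n. F k (t k)))"
    proof (rule AE_mp[OF AE_PP_ne[of n "(1,1)"]], rule AE_I2, rule impI)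
      fix t assume t: "t \<in> space (PP n)" and ne: "\<forall>k<n. t k \<noteq> (1, 1)"
      have "indicator (DA (A \<union> B) n) t = (\<Sum>j\<le>n. indicator (EE A B n j) t :: real)"
        using t ne by (intro ind_split Asub Bsub) (auto simp: space_PP)
      then show "GG (A \<union> B) n F t = (\<Sum>j\<le>n. indicator (EE A B n j) t *\<^sub>R (\<Prod>k<n. F k (t k)))"
        unfolding GG_def by (simp add: scaleR_sum_left)
    qed
  qed
  also have "\<dots> = (\<Sum>j\<le>n. \<integral>t. indicator (EE A B n j) t *\<^sub>R (\<Prod>k<n. F k (t k)) \<partial>PP n)"
    by (rule Bochner_Integration.integral_sum) (rule intE)
  also have "\<dots> = (\<Sum>j\<le>n. integral\<^sup>L (PP j) (GG A j F) * integral\<^sup>L (PP (n-j)) (GG B (n-j) (\<lambda>k. F (k+j))))"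
    by (intro sum.cong refl factor F A B) auto
  finally show ?thesis .
qed

definition Fw :: "(real \<times> real \<Rightarrow> hpt) \<Rightarrow> (complex \<Rightarrow> complex \<Rightarrow> complex) list \<Rightarrow> nat \<Rightarrow> real \<times> real \<Rightarrow> complex" where
  "Fw g ws k x = (if k < length ws then indicator (sq 2) x *\<^sub>R pullback g (ws ! k) x else 0)"

lemma Fw_integrable:
  assumes "\<forall>f\<in>set ws. set_integrable lborel (sq 2) (pullback g f)"
  shows "integrable lborel (Fw g ws k)"
proof (cases "k < length ws")
  case True
  then have "set_integrable lborel (sq 2) (pullback g (ws ! k))" using assms by auto
  then show ?thesis using True unfolding Fw_def set_integrable_def by simp
next
  case False then show ?thesis unfolding Fw_def by simp
qed

lemma iter_eq:
  assumes S: "S \<subseteq> sq 2"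
  shows "iter_int g S ws = integral\<^sup>L (PP (length ws)) (GG S (length ws) (Fw g ws))"
  unfolding iter_int_def set_lebesgue_integral_def
proof (rule Bochner_Integration.integral_cong[OF refl])
  fix t
  show "indicator (DA S (length ws)) t *\<^sub>R (\<Prod>j<length ws. pullback g (ws ! j) (t j)) = GG S (length ws) (Fw g ws) t"
  proof (cases "t \<in> DA S (length ws)")
    case True
    then have "\<forall>k<length ws. t k \<in> sq 2" using S unfolding DA_def by auto
    then have "(\<Prod>j<length ws. pullback g (ws ! j) (t j)) = (\<Prod>j<length ws. Fw g ws j (t j))"
      unfolding Fw_def by (intro prod.cong) auto
    then show ?thesis unfolding GG_def by simp
  next
    case False then show ?thesis unfolding GG_def by simp
  qed
qed

lemma GG_take:
  assumes "j \<le> length ws"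
  shows "GG A j (Fw g ws) = GG A j (Fw g (take j ws))"
proof (rule ext)
  fix t
  have "(\<Prod>k<j. Fw g ws k (t k)) = (\<Prod>k<j. Fw g (take j ws) k (t k))"
  proof (rule prod.cong[OF refl])
    fix k assume "k \<in> {..<j}"
    then have k: "k < j" by simp
    then show "Fw g ws k (t k) = Fw g (take j ws) k (t k)" using assms unfolding Fw_def by simp
  qed
  then show "GG A j (Fw g ws) t = GG A j (Fw g (take j ws)) t" unfolding GG_def by simp
qed

lemma GG_drop:
  shows "GG B (length ws - j) (\<lambda>k. Fw g ws (k + j)) = GG B (length ws - j) (Fw g (drop j ws))"
proof (rule ext)
  fix t
  have "(\<Prod>k<length ws - j. Fw g ws (k + j) (t k)) = (\<Prod>k<length ws - j. Fw g (drop j ws) k (t k))"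
  proof (rule prod.cong[OF refl])
    fix k assume "k \<in> {..<length ws - j}"
    then have k: "k < length ws - j" by simp
    then have k2: "k + j < length ws" "j \<le> length ws" by auto
    have "drop j ws ! k = ws ! (j + k)" using k2(2) by (rule nth_drop)
    then show "Fw g ws (k + j) (t k) = Fw g (drop j ws) k (t k)"
      using k k2 unfolding Fw_def by (simp add: add.commute)
  qed
  then show "GG B (length ws - j) (\<lambda>k. Fw g ws (k + j)) t = GG B (length ws - j) (Fw g (drop j ws)) t"
    unfolding GG_def by simp
qed

lemma part_i:
  assumes integ: "\<forall>f\<in>set ws. set_integrable lborel (sq 2) (pullback g f)"
    and Asub: "A \<subseteq> {0..1} \<times> {0..1}" and Bsub: "B \<subseteq> {1..2} \<times> {1..2}"
    and A: "A \<in> sets borel" and B: "B \<in> sets borel"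
  shows "iter_int g (A \<union> B) ws = (\<Sum>j\<le>length ws. iter_int g A (take j ws) * iter_int g B (drop j ws))"
proof -
  have sA: "A \<subseteq> sq 2" and sB: "B \<subseteq> sq 2" using Asub Bsub unfolding sq_def by auto
  have "iter_int g (A \<union> B) ws = integral\<^sup>L (PP (length ws)) (GG (A \<union> B) (length ws) (Fw g ws))"
    using sA sB by (intro iter_eq) auto
  also have "\<dots> = (\<Sum>j\<le>length ws. integral\<^sup>L (PP j) (GG A j (Fw g ws)) *
      integral\<^sup>L (PP (length ws - j)) (GG B (length ws - j) (\<lambda>k. Fw g ws (k + j))))"
    by (rule split_main[OF Fw_integrable[OF integ] Asub Bsub A B])
  also have "\<dots> = (\<Sum>j\<le>length ws. iter_int g A (take j ws) * iter_int g B (drop j ws))"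
  proof (rule sum.cong[OF refl])
    fix j assume "j \<in> {..length ws}"
    then have j: "j \<le> length ws" by simp
    have len: "length (take j ws) = j" using j by simp
    have len2: "length (drop j ws) = length ws - j" by simp
    have "integral\<^sup>L (PP j) (GG A j (Fw g ws)) = iter_int g A (take j ws)"
      unfolding GG_take[OF j] iter_eq[OF sA, of g "take j ws"] len ..
    moreover have "integral\<^sup>L (PP (length ws - j)) (GG B (length ws - j) (\<lambda>k. Fw g ws (k + j))) = iter_int g B (drop j ws)"
      unfolding GG_drop iter_eq[OF sB, of g "drop j ws"] len2 ..
    ultimately show "integral\<^sup>L (PP j) (GG A j (Fw g ws)) *
      integral\<^sup>L (PP (length ws - j)) (GG B (length ws - j) (\<lambda>k. Fw g ws (k + j))) =
      iter_int g A (take j ws) * iter_int g B (drop j ws)" by simp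
  qed
  finally show ?thesis .
qed

lemma part_ii:
  assumes integ: "\<forall>f\<in>set ws. set_integrable lborel (sq 2) (pullback g f)"
    and Asub: "A \<subseteq> {0..1} \<times> {0..1}" and Bsub: "B \<subseteq> {1..2} \<times> {1..2}"
    and A: "A \<in> sets borel" and B: "B \<in> sets borel"
  shows "Ja g (A \<union> B) ws = nc_mult (Ja g A ws) (Ja g B ws)"
proof
  fix w :: "nat list"
  show "Ja g (A \<union> B) ws w = nc_mult (Ja g A ws) (Ja g B ws) w"
  proof (cases "set w \<subseteq> {..<length ws}")
    case True
    define v where "v = map (\<lambda>i. ws ! i) w"
    have integ': "\<forall>f\<in>set v. set_integrable lborel (sq 2) (pullback g f)"
    proof
      fix f assume "f \<in> set v"
      then obtain i where i: "i \<in> set w" and f: "f = ws ! i" unfolding v_def by auto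
      have "i < length ws" using i True by auto
      then have "f \<in> set ws" unfolding f by (rule nth_mem)
      then show "set_integrable lborel (sq 2) (pullback g f)" using integ by blast
    qed
    have "Ja g (A \<union> B) ws w = iter_int g (A \<union> B) v"
      unfolding Ja_def v_def by (rule if_P[OF True])
    also have "\<dots> = (\<Sum>k\<le>length v. iter_int g A (take k v) * iter_int g B (drop k v))"
      by (rule part_i[OF integ' Asub Bsub A B])
    also have "\<dots> = (\<Sum>k\<le>length w. Ja g A ws (take k w) * Ja g B ws (drop k w))"
    proof -
      have lv: "length v = length w" unfolding v_def by simp
      have "iter_int g A (take k v) * iter_int g B (drop k v) = Ja g A ws (take k w) * Ja g B ws (drop k w)" for k
      proof -
        have t1: "set (take k w) \<subseteq> {..<length ws}" using True set_take_subset by (rule order_trans[rotated])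
        have t2: "set (drop k w) \<subseteq> {..<length ws}" using True set_drop_subset by (rule order_trans[rotated])
        show ?thesis unfolding Ja_def if_P[OF t1] if_P[OF t2] v_def take_map drop_map ..
      qed
      then show ?thesis unfolding lv by simp
    qed
    also have "\<dots> = nc_mult (Ja g A ws) (Ja g B ws) w"
      unfolding nc_mult_def ..
    finally show ?thesis .
  next
    case False
    have z: "Ja g A ws (take k w) * Ja g B ws (drop k w) = 0" for k
    proof -
      have "set w = set (take k w) \<union> set (drop k w)"
        using append_take_drop_id[of k w] set_append[of "take k w" "drop k w"] by simp
      then have "\<not> set (take k w) \<subseteq> {..<length ws} \<or> \<not> set (drop k w) \<subseteq> {..<length ws}"
        using False by auto
      then show ?thesis
      proof
        assume "\<not> set (take k w) \<subseteq> {..<length ws}"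
        then have "Ja g A ws (take k w) = 0" unfolding Ja_def by (rule if_not_P)
        then show ?thesis by simp
      next
        assume "\<not> set (drop k w) \<subseteq> {..<length ws}"
        then have "Ja g B ws (drop k w) = 0" unfolding Ja_def by (rule if_not_P)
        then show ?thesis by simp
      qed
    qed
    have "Ja g (A \<union> B) ws w = 0" unfolding Ja_def by (rule if_not_P[OF False])
    moreover have "nc_mult (Ja g A ws) (Ja g B ws) w = 0" unfolding nc_mult_def z by simp
    ultimately show ?thesis by simp
  qed
qed

lemma diangle_borel:
  assumes "diangle A p q"
  shows "A \<in> sets borel"
proof -
  from assms have "A homeomorphic (cball (0::real \<times> real) 1)" unfolding diangle_def
    by (elim exE conjE)
  then have "compact A" by (metis homeomorphic_compactness compact_cball)
  then show ?thesis by (intro borel_closed compact_imp_closed)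
qed

theorem mainTheorem3:
  fixes d :: int and g :: "real \<times> real \<Rightarrow> hpt"
    and ws :: "(complex \<Rightarrow> complex \<Rightarrow> complex) list"
    and A B :: "(real \<times> real) set"
  assumes K: "real_quadratic_param d"
    and forms: "\<forall>f\<in>set ws. holo_form f \<and> cont_at_cusps d f"
    and memb: "membrane d 2 g"
    and integ: "\<forall>f\<in>set ws. set_integrable lborel (sq 2) (pullback g f)"
    and A: "A \<subseteq> {0..1} \<times> {0..1}" "diangle A (0, 0) (1, 1)"
    and B: "B \<subseteq> {1..2} \<times> {1..2}" "diangle B (1, 1) (2, 2)"
  shows "iter_int g (A \<union> B) ws =
           (\<Sum>j\<le>length ws. iter_int g A (take j ws) * iter_int g B (drop j ws)) \<and>
         Ja g (A \<union> B) ws = nc_mult (Ja g A ws) (Ja g B ws)"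
  using part_i[OF integ A(1) B(1) diangle_borel[OF A(2)] diangle_borel[OF B(2)]]
    part_ii[OF integ A(1) B(1) diangle_borel[OF A(2)] diangle_borel[OF B(2)]] by (rule conjI)

end
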